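(* For every integer $k\ge 2$, there is a connected 2-degenerate graph of order $n=5k+1$ with exactly $4^{k}=4^{(n-1)/5}$ inclusion-minimal connected dominating sets; hence the maximum number of minimal connected dominating sets in 2-degenerate graphs of order $n$ is $\Omega(1.3195^n)$.
   Context: A graph is 2-degenerate if there is an ordering $(v_1,\dots,v_n)$ of its vertices such that each $v_i$ has degree at most $2$ in $G[\{v_i,\dots,v_n\}]$. A connected dominating set of a graph $G=(V,E)$ is a set $S\subseteq V$ such that every vertex outside $S$ has a neighbor in $S$ and $G[S]$ is connected; it is (inclusion-)minimal if no proper subset is one. (The witnessing graph $G_2^k$ consists of $k$ disjoint copies of the graph on $\{x_1,x_2,y_1,y_2,z\}$ with edges $x_1x_2$, $x_1y_2$, $x_2y_1$, $zy_1$, $zy_2$, plus a vertex $s$ adjacent to all $x$-vertices of all copies.) *)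

theory Defs
  imports Main
begin

definition sgraph :: "'a set \<Rightarrow> 'a set set \<Rightarrow> bool" where
  "sgraph V E \<longleftrightarrow> finite V \<and> (\<forall>e\<in>E. e \<subseteq> V \<and> card e = 2)"

definition adj :: "'a set set \<Rightarrow> 'a \<Rightarrow> 'a \<Rightarrow> bool" where
  "adj E u v \<longleftrightarrow> {u, v} \<in> E"

definition connected_set :: "'a set set \<Rightarrow> 'a set \<Rightarrow> bool" where
  "connected_set E S \<longleftrightarrow> S \<noteq> {} \<and>
     (\<forall>u\<in>S. \<forall>v\<in>S. (\<lambda>x y. x \<in> S \<and> y \<in> S \<and> adj E x y)\<^sup>*\<^sup>* u v)"

definition dominating_set :: "'a set \<Rightarrow> 'a set set \<Rightarrow> 'a set \<Rightarrow> bool" where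
  "dominating_set V E S \<longleftrightarrow> S \<subseteq> V \<and> (\<forall>v\<in>V - S. \<exists>u\<in>S. adj E u v)"

definition connected_dominating_set :: "'a set \<Rightarrow> 'a set set \<Rightarrow> 'a set \<Rightarrow> bool" where
  "connected_dominating_set V E S \<longleftrightarrow> dominating_set V E S \<and> connected_set E S"

definition minimal_cds :: "'a set \<Rightarrow> 'a set set \<Rightarrow> 'a set \<Rightarrow> bool" where
  "minimal_cds V E S \<longleftrightarrow> connected_dominating_set V E S \<and>
     (\<forall>T. T \<subset> S \<longrightarrow> \<not> connected_dominating_set V E T)"

definition two_degenerate :: "'a set \<Rightarrow> 'a set set \<Rightarrow> bool" where
  "two_degenerate V E \<longleftrightarrow> (\<exists>vs. distinct vs \<and> set vs = V \<and>
     (\<forall>i < length vs. card {w \<in> set (drop i vs). adj E (vs ! i) w} \<le> 2))"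

end

theory Submission
  imports Defs "HOL-Library.FuncSet"
begin


definition Eg :: "nat \<Rightarrow> nat set set" where
 "Eg k = (\<Union>i<k. {{5*k,5*i+3},{5*k,5*i+4},{5*i+3,5*i+4},{5*i+2,5*i+3},{5*i+1,5*i+4},{5*i,5*i+1},{5*i,5*i+2}})"

lemma adj_sym: "adj E u v = adj E v u"
  by (simp add: adj_def insert_commute)

lemma adj_E: "adj (Eg k) u v \<longleftrightarrow> (\<exists>i<k. (u,v) \<in> {(5*k,5*i+3),(5*i+3,5*k),(5*k,5*i+4),(5*i+4,5*k),
   (5*i+3,5*i+4),(5*i+4,5*i+3),(5*i+2,5*i+3),(5*i+3,5*i+2),(5*i+1,5*i+4),(5*i+4,5*i+1),
   (5*i,5*i+1),(5*i+1,5*i),(5*i,5*i+2),(5*i+2,5*i)})"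
  unfolding adj_def Eg_def by (auto simp: doubleton_eq_iff)

lemma blk_eq: "c < 5 \<Longrightarrow> d < 5 \<Longrightarrow> (5*i+c = 5*j+(d::nat)) \<longleftrightarrow> i = j \<and> c = d"
  by presburger

lemma blk_eq0: "c < 5 \<Longrightarrow> (5*i+c = 5*(j::nat)) \<longleftrightarrow> i = j \<and> c = 0"
  by presburger

lemma nb: assumes "i<k" "c<5"
  shows "adj (Eg k) (5*i+c) v \<longleftrightarrow> (c=0 \<and> (v=5*i+1 \<or> v=5*i+2)) \<or> (c=1 \<and> (v=5*i \<or> v=5*i+4))
     \<or> (c=2 \<and> (v=5*i \<or> v=5*i+3)) \<or> (c=3 \<and> (v=5*k \<or> v=5*i+4 \<or> v=5*i+2))
     \<or> (c=4 \<and> (v=5*k \<or> v=5*i+3 \<or> v=5*i+1))"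
proof
  assume "adj (Eg k) (5*i+c) v"
  then obtain j where j: "j<k" and "(5*i+c,v) \<in> {(5*k,5*j+3),(5*j+3,5*k),(5*k,5*j+4),(5*j+4,5*k),
   (5*j+3,5*j+4),(5*j+4,5*j+3),(5*j+2,5*j+3),(5*j+3,5*j+2),(5*j+1,5*j+4),(5*j+4,5*j+1),
   (5*j,5*j+1),(5*j+1,5*j),(5*j,5*j+2),(5*j+2,5*j)}" unfolding adj_E by blast
  note m = this
  have lt: "5*i+c < 5*k" using assms by simp
  have "5*i+c = 5*k \<or> (5*j \<le> 5*i+c \<and> 5*i+c \<le> 5*j+4)" using m
    by (elim insertE emptyE) auto
  then have "5*j \<le> 5*i+c \<and> 5*i+c \<le> 5*j+4" using lt by linarith
  then have "j = i" using assms by presburger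
  then show "(c=0 \<and> (v=5*i+1 \<or> v=5*i+2)) \<or> (c=1 \<and> (v=5*i \<or> v=5*i+4))
     \<or> (c=2 \<and> (v=5*i \<or> v=5*i+3)) \<or> (c=3 \<and> (v=5*k \<or> v=5*i+4 \<or> v=5*i+2))
     \<or> (c=4 \<and> (v=5*k \<or> v=5*i+3 \<or> v=5*i+1))" using m lt
    by (elim insertE emptyE) auto
next
  assume "(c=0 \<and> (v=5*i+1 \<or> v=5*i+2)) \<or> (c=1 \<and> (v=5*i \<or> v=5*i+4))
     \<or> (c=2 \<and> (v=5*i \<or> v=5*i+3)) \<or> (c=3 \<and> (v=5*k \<or> v=5*i+4 \<or> v=5*i+2))
     \<or> (c=4 \<and> (v=5*k \<or> v=5*i+3 \<or> v=5*i+1))"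
  then show "adj (Eg k) (5*i+c) v" unfolding adj_E using assms by auto
qed

lemma nbk: "adj (Eg k) (5*k) v \<longleftrightarrow> (\<exists>i<k. v=5*i+3 \<or> v=5*i+4)"
proof
  assume "adj (Eg k) (5*k) v"
  then obtain j where j: "j<k" and "(5*k,v) \<in> {(5*k,5*j+3),(5*j+3,5*k),(5*k,5*j+4),(5*j+4,5*k),
   (5*j+3,5*j+4),(5*j+4,5*j+3),(5*j+2,5*j+3),(5*j+3,5*j+2),(5*j+1,5*j+4),(5*j+4,5*j+1),
   (5*j,5*j+1),(5*j+1,5*j),(5*j,5*j+2),(5*j+2,5*j)}" unfolding adj_E by blast
  then show "\<exists>i<k. v=5*i+3 \<or> v=5*i+4" using j
    by (elim insertE emptyE) auto
next
  assume "\<exists>i<k. v=5*i+3 \<or> v=5*i+4" then show "adj (Eg k) (5*k) v" unfolding adj_E by auto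
qed


definition Vg :: "nat \<Rightarrow> nat set" where "Vg k = {..5*k}"
definition vx :: "nat \<Rightarrow> nat \<Rightarrow> nat" where "vx i d = 5*i+d"
definition sv :: "nat \<Rightarrow> nat" where "sv k = 5*k"
definition pat :: "nat \<Rightarrow> nat set" where
  "pat c = (if c=0 then {1,3,4} else if c=1 then {2,3,4} else if c=2 then {0,2,3} else {0,1,4})"
definition Sf :: "nat \<Rightarrow> (nat \<Rightarrow> nat) \<Rightarrow> nat set" where
  "Sf k f = insert (sv k) (\<Union>i<k. vx i ` pat (f i))"

lemma nbv: "i<k \<Longrightarrow> c<5 \<Longrightarrow> adj (Eg k) (vx i c) v \<longleftrightarrow> (c=0 \<and> (v=vx i 1 \<or> v=vx i 2)) \<or> (c=1 \<and> (v=vx i 0 \<or> v=vx i 4))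
     \<or> (c=2 \<and> (v=vx i 0 \<or> v=vx i 3)) \<or> (c=3 \<and> (v=sv k \<or> v=vx i 4 \<or> v=vx i 2))
     \<or> (c=4 \<and> (v=sv k \<or> v=vx i 3 \<or> v=vx i 1))"
  using nb[of i k c v] unfolding vx_def sv_def by simp

lemma nb0: "i<k \<Longrightarrow> adj (Eg k) (vx i 0) v \<longleftrightarrow> v=vx i 1 \<or> v=vx i 2" using nbv[of i k 0 v] by simp
lemma nb1: "i<k \<Longrightarrow> adj (Eg k) (vx i 1) v \<longleftrightarrow> v=vx i 0 \<or> v=vx i 4" using nbv[of i k 1 v] by simp
lemma nb2: "i<k \<Longrightarrow> adj (Eg k) (vx i 2) v \<longleftrightarrow> v=vx i 0 \<or> v=vx i 3" using nbv[of i k 2 v] by simp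
lemma nb3: "i<k \<Longrightarrow> adj (Eg k) (vx i 3) v \<longleftrightarrow> v=sv k \<or> v=vx i 4 \<or> v=vx i 2" using nbv[of i k 3 v] by simp
lemma nb4: "i<k \<Longrightarrow> adj (Eg k) (vx i 4) v \<longleftrightarrow> v=sv k \<or> v=vx i 3 \<or> v=vx i 1" using nbv[of i k 4 v] by simp
lemma nbs: "adj (Eg k) (sv k) v \<longleftrightarrow> (\<exists>i<k. v = vx i 3 \<or> v = vx i 4)"
  unfolding vx_def sv_def by (rule nbk)

lemma nb_gen: assumes "i<k" "e<5" "adj (Eg k) (vx i e) y" shows "y = sv k \<or> (\<exists>c<5. y = vx i c)"
proof -
  have "y = sv k \<or> y = vx i 0 \<or> y = vx i 1 \<or> y = vx i 2 \<or> y = vx i 3 \<or> y = vx i 4"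
    using nbv[of i k e y] assms by auto
  moreover have "\<forall>c\<in>{0,1,2,3,4::nat}. c<5" by simp
  ultimately show ?thesis by blast
qed




lemma vx_eq: "d<5 \<Longrightarrow> e<5 \<Longrightarrow> vx i d = vx j e \<longleftrightarrow> i = j \<and> d = e"
  unfolding vx_def by (rule blk_eq)
lemma vx_lt_sv: "i<k \<Longrightarrow> d<5 \<Longrightarrow> vx i d < sv k"
  unfolding vx_def sv_def by linarith
lemma vx_neq_sv: "i<k \<Longrightarrow> d<5 \<Longrightarrow> vx i d \<noteq> sv k" "i<k \<Longrightarrow> d<5 \<Longrightarrow> sv k \<noteq> vx i d"
  using vx_lt_sv[of i k d] by simp_all
lemma vx_le_iff[simp]: "vx i d \<le> vx i e \<longleftrightarrow> d \<le> e" unfolding vx_def by simp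
lemma vx_in: "i<k \<Longrightarrow> d<5 \<Longrightarrow> vx i d \<in> Vg k" unfolding vx_def Vg_def by auto
lemma sv_in: "sv k \<in> Vg k" unfolding sv_def Vg_def by auto
lemma V_cases: assumes "u \<in> Vg k" shows "u = sv k \<or> (\<exists>i<k. \<exists>d<5. u = vx i d)"
proof (cases "u = 5*k")
  case True then show ?thesis by (simp add: sv_def)
next
  case False
  then have "u < 5*k" using assms unfolding Vg_def by auto
  then have "u div 5 < k" by simp
  moreover have "u = vx (u div 5) (u mod 5)" unfolding vx_def by simp
  moreover have "u mod 5 < 5" by simp
  ultimately show ?thesis by blast
qed




lemma stp: "x\<in>S \<Longrightarrow> y\<in>S \<Longrightarrow> adj E x y \<Longrightarrow> (\<lambda>x y. x\<in>S \<and> y\<in>S \<and> adj E x y)\<^sup>*\<^sup>* y z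
   \<Longrightarrow> (\<lambda>x y. x\<in>S \<and> y\<in>S \<and> adj E x y)\<^sup>*\<^sup>* x z"
  by (rule converse_rtranclp_into_rtranclp[of _ x y z]) auto

lemma rev_path: assumes "(\<lambda>x y. x\<in>S \<and> y\<in>S \<and> adj E x y)\<^sup>*\<^sup>* u r"
  shows "(\<lambda>x y. x\<in>S \<and> y\<in>S \<and> adj E x y)\<^sup>*\<^sup>* r u"
  using assms
proof (induction rule: rtranclp_induct)
  case base then show ?case by simp
next
  case (step y z)
  have a: "adj E z y" using step(2) adj_sym[of E y z] by simp
  show ?case using stp[of z S y E u] a step by simp
qed

lemma conn: assumes "r \<in> S" "\<forall>u\<in>S. (\<lambda>x y. x\<in>S \<and> y\<in>S \<and> adj E x y)\<^sup>*\<^sup>* u r"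
  shows "connected_set E S"
  unfolding connected_set_def
proof (intro conjI ballI)
  show "S \<noteq> {}" using assms by auto
  fix u v assume "u \<in> S" "v \<in> S"
  then show "(\<lambda>x y. x\<in>S \<and> y\<in>S \<and> adj E x y)\<^sup>*\<^sup>* u v"
  proof -
    have a: "(\<lambda>x y. x\<in>S \<and> y\<in>S \<and> adj E x y)\<^sup>*\<^sup>* u r" using assms(2) \<open>u\<in>S\<close> by (rule bspec)
    have b: "(\<lambda>x y. x\<in>S \<and> y\<in>S \<and> adj E x y)\<^sup>*\<^sup>* r v" using rev_path[OF bspec[OF assms(2) \<open>v\<in>S\<close>]] .
    show ?thesis using rtranclp_trans[OF a b] .
  qed
qed

lemma closed_contra: assumes "connected_set E S" "u \<in> C" "C \<subseteq> S" "v \<in> S" "v \<notin> C"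
  "\<forall>x\<in>C. \<forall>y\<in>S. adj E x y \<longrightarrow> y \<in> C"
  shows False
proof -
  have "(\<lambda>x y. x\<in>S \<and> y\<in>S \<and> adj E x y)\<^sup>*\<^sup>* u v"
    using assms(1) \<open>u\<in>C\<close> \<open>C\<subseteq>S\<close> \<open>v\<in>S\<close> unfolding connected_set_def by (meson subsetD)
  then have "v \<in> C"
  proof (induction rule: rtranclp_induct)
    case base then show ?case using assms(2) .
  next
    case (step y z) then show ?case using assms(6) by simp
  qed
  with assms show False by simp
qed




lemma nb1s: "i<k \<Longrightarrow> adj (Eg k) (vx i (Suc 0)) v \<longleftrightarrow> v=vx i 0 \<or> v=vx i 4" using nb1 by simp

lemma pall: assumes "i<k" "sv k \<in> S" "d<5" "vx i d \<in> S"
  "d=0 \<longrightarrow> (vx i 2\<in>S \<and> vx i 3\<in>S) \<or> (vx i 1\<in>S \<and> vx i 4\<in>S)"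
  "d=1 \<longrightarrow> vx i 4 \<in> S" "d=2 \<longrightarrow> vx i 3 \<in> S"
  shows "(\<lambda>x y. x\<in>S \<and> y\<in>S \<and> adj (Eg k) x y)\<^sup>*\<^sup>* (vx i d) (sv k)"
proof -
  have r: "(\<lambda>x y. x\<in>S \<and> y\<in>S \<and> adj (Eg k) x y)\<^sup>*\<^sup>* (sv k) (sv k)" by simp
  have p3: "(\<lambda>x y. x\<in>S \<and> y\<in>S \<and> adj (Eg k) x y)\<^sup>*\<^sup>* (vx i 3) (sv k)" if "vx i 3 \<in> S"
    by (rule stp[where y="sv k", OF that assms(2) _ r]) (simp add: nb3 assms(1))
  have p4: "(\<lambda>x y. x\<in>S \<and> y\<in>S \<and> adj (Eg k) x y)\<^sup>*\<^sup>* (vx i 4) (sv k)" if "vx i 4 \<in> S"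
    by (rule stp[where y="sv k", OF that assms(2) _ r]) (simp add: nb4 assms(1))
  have p1: "(\<lambda>x y. x\<in>S \<and> y\<in>S \<and> adj (Eg k) x y)\<^sup>*\<^sup>* (vx i 1) (sv k)" if "vx i 1 \<in> S" "vx i 4 \<in> S"
    by (rule stp[where y="vx i 4", OF that _ p4[OF that(2)]]) (simp add: nb1s assms(1))
  have p2: "(\<lambda>x y. x\<in>S \<and> y\<in>S \<and> adj (Eg k) x y)\<^sup>*\<^sup>* (vx i 2) (sv k)" if "vx i 2 \<in> S" "vx i 3 \<in> S"
    by (rule stp[where y="vx i 3", OF that _ p3[OF that(2)]]) (simp add: nb2 assms(1))
  have p0a: "(\<lambda>x y. x\<in>S \<and> y\<in>S \<and> adj (Eg k) x y)\<^sup>*\<^sup>* (vx i 0) (sv k)" if "vx i 0 \<in> S" "vx i 2 \<in> S" "vx i 3 \<in> S"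
    by (rule stp[where y="vx i 2", OF that(1,2) _ p2[OF that(2,3)]]) (simp add: nb0 assms(1))
  have p0b: "(\<lambda>x y. x\<in>S \<and> y\<in>S \<and> adj (Eg k) x y)\<^sup>*\<^sup>* (vx i 0) (sv k)" if "vx i 0 \<in> S" "vx i 1 \<in> S" "vx i 4 \<in> S"
    by (rule stp[where y="vx i 1", OF that(1,2) _ p1[OF that(2,3)]]) (simp add: nb0 assms(1))
  have "d=0 \<or> d=1 \<or> d=2 \<or> d=3 \<or> d=4" using assms(3) by arith
  then show ?thesis
  proof (elim disjE)
    assume "d=0" then show ?thesis using assms(4,5) p0a p0b by auto
  next
    assume "d=1" then show ?thesis using assms(4,6) p1 by auto
  next
    assume "d=2" then show ?thesis using assms(4,7) p2 by auto
  next
    assume "d=3" then show ?thesis using assms(4) p3 by auto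
  next
    assume "d=4" then show ?thesis using assms(4) p4 by auto
  qed
qed

lemma pat_lt: "d \<in> pat c \<Longrightarrow> d < 5" by (auto simp: pat_def split: if_splits)

lemma pat_cases: "c < 4 \<Longrightarrow> pat c = {1,3,4} \<or> pat c = {2,3,4} \<or> pat c = {0,2,3} \<or> pat c = {0,1,4}"
  by (auto simp: pat_def)

lemma pat_inj: assumes "c<4" "c'<4" "pat c \<subseteq> pat c'" shows "c = c'"
proof -
  have "c=0 \<or> c=1 \<or> c=2 \<or> c=3" "c'=0 \<or> c'=1 \<or> c'=2 \<or> c'=3" using assms by arith+
  then show ?thesis using assms(3) by (elim disjE) (simp_all add: pat_def)
qed

lemma mem: assumes "i<k" "d<5" shows "vx i d \<in> Sf k f \<longleftrightarrow> d \<in> pat (f i)"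
proof
  assume "vx i d \<in> Sf k f"
  moreover have "vx i d \<noteq> sv k" using vx_neq_sv assms by simp
  ultimately obtain j e where "j<k" "e \<in> pat (f j)" "vx i d = vx j e" unfolding Sf_def by auto
  moreover then have "e<5" using pat_lt by simp
  ultimately show "d \<in> pat (f i)" using vx_eq[of d e i j] assms by simp
next
  assume "d \<in> pat (f i)" then show "vx i d \<in> Sf k f" unfolding Sf_def using assms by auto
qed

lemma sv_Sf: "sv k \<in> Sf k f" unfolding Sf_def by simp

lemma Sf_cases: "u \<in> Sf k f \<Longrightarrow> u = sv k \<or> (\<exists>i<k. \<exists>d\<in>pat (f i). u = vx i d)"
  unfolding Sf_def by auto

lemma Sf_sub: "Sf k f \<subseteq> Vg k"
proof
  fix u assume "u \<in> Sf k f"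
  then show "u \<in> Vg k" using Sf_cases[of u k f] sv_in vx_in pat_lt by auto
qed

lemma dom_help: "w \<in> S \<Longrightarrow> adj E v w \<Longrightarrow> \<exists>u\<in>S. adj E u v"
  using adj_sym[of E v w] by auto

lemma cds_Sf: assumes f: "\<forall>i<k. f i < 4"
  shows "connected_dominating_set (Vg k) (Eg k) (Sf k f)"
  unfolding connected_dominating_set_def
proof
  show "dominating_set (Vg k) (Eg k) (Sf k f)"
    unfolding dominating_set_def
  proof (intro conjI Sf_sub ballI)
    fix v assume v: "v \<in> Vg k - Sf k f"
    then have "v \<noteq> sv k" using sv_Sf by auto
    then obtain i d where id: "i<k" "d<5" "v = vx i d" using V_cases v by blast
    then have dn: "d \<notin> pat (f i)" using v mem by auto
    have P: "pat (f i) = {1,3,4} \<or> pat (f i) = {2,3,4} \<or> pat (f i) = {0,2,3} \<or> pat (f i) = {0,1,4}"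
      using pat_cases f id by simp
    have d5: "d=0 \<or> d=1 \<or> d=2 \<or> d=3 \<or> d=4" using id by arith
    have "(vx i 0 \<in> Sf k f \<and> adj (Eg k) (vx i d) (vx i 0)) \<or> (vx i 1 \<in> Sf k f \<and> adj (Eg k) (vx i d) (vx i 1))
      \<or> (vx i 2 \<in> Sf k f \<and> adj (Eg k) (vx i d) (vx i 2)) \<or> (vx i 3 \<in> Sf k f \<and> adj (Eg k) (vx i d) (vx i 3))
      \<or> (vx i 4 \<in> Sf k f \<and> adj (Eg k) (vx i d) (vx i 4)) \<or> (sv k \<in> Sf k f \<and> adj (Eg k) (vx i d) (sv k))"
      using d5 P dn id by (elim disjE) (simp_all add: mem nb0 nb1 nb1s nb2 nb3 nb4 vx_eq vx_neq_sv sv_Sf)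
    then obtain w where "w \<in> Sf k f" "adj (Eg k) (vx i d) w" by blast
    then show "\<exists>u\<in>Sf k f. adj (Eg k) u v" using dom_help[of w "Sf k f" "Eg k" "vx i d"] id(3) by simp
  qed
next
  show "connected_set (Eg k) (Sf k f)"
  proof (rule conn[OF sv_Sf], rule ballI)
    fix u assume u: "u \<in> Sf k f"
    show "(\<lambda>x y. x\<in>Sf k f \<and> y\<in>Sf k f \<and> adj (Eg k) x y)\<^sup>*\<^sup>* u (sv k)"
    proof (cases "u = sv k")
      case True then show ?thesis by simp
    next
      case False
      then obtain i d where id: "i<k" "d \<in> pat (f i)" "u = vx i d" using Sf_cases u by blast
      have d5: "d<5" using pat_lt id by simp
      have P: "pat (f i) = {1,3,4} \<or> pat (f i) = {2,3,4} \<or> pat (f i) = {0,2,3} \<or> pat (f i) = {0,1,4}"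
        using pat_cases f id by simp
      have "(\<lambda>x y. x\<in>Sf k f \<and> y\<in>Sf k f \<and> adj (Eg k) x y)\<^sup>*\<^sup>* (vx i d) (sv k)"
      proof (rule pall[OF id(1) sv_Sf d5])
        show "vx i d \<in> Sf k f" using mem id d5 by simp
        show "d = 0 \<longrightarrow> vx i 2 \<in> Sf k f \<and> vx i 3 \<in> Sf k f \<or> vx i 1 \<in> Sf k f \<and> vx i 4 \<in> Sf k f"
          using P id(2) by (elim disjE) (auto simp: mem[OF id(1)]) 
        show "d = 1 \<longrightarrow> vx i 4 \<in> Sf k f" using P id(2) by (elim disjE) (auto simp: mem[OF id(1)]) 
        show "d = 2 \<longrightarrow> vx i 3 \<in> Sf k f" using P id(2) by (elim disjE) (auto simp: mem[OF id(1)]) 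
      qed
      then show ?thesis using id by simp
    qed
  qed
qed




lemma closed_local: assumes "connected_set (Eg k) S" "sv k \<in> S" "i<k" "x \<in> C" "C \<subseteq> S"
  "C \<subseteq> {vx i 0, vx i 1, vx i 2}" "\<forall>x\<in>C. \<forall>y\<in>S. adj (Eg k) x y \<longrightarrow> y \<in> C"
  shows False
proof -
  have "sv k \<notin> {vx i 0, vx i 1, vx i 2}" using vx_neq_sv(2)[OF assms(3)] by simp
  then have "sv k \<notin> C" using assms(6) by blast
  then show False using closed_contra[OF assms(1) assms(4) assms(5) assms(2) _ assms(7)] by simp
qed

lemma pat_contain: assumes cds: "connected_dominating_set (Vg k) (Eg k) S" and s: "sv k \<in> S" and i: "i<k"
  shows "\<exists>c<4. \<forall>d\<in>pat c. vx i d \<in> S"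
proof -
  have dom: "\<forall>v\<in>Vg k - S. \<exists>u\<in>S. adj (Eg k) u v" and conn: "connected_set (Eg k) S"
    using cds unfolding connected_dominating_set_def dominating_set_def by auto
  have dm: "\<exists>u\<in>S. adj (Eg k) (vx i d) u" if h: "vx i d \<notin> S" "d<5" for d
  proof -
    obtain u where "u \<in> S" "adj (Eg k) u (vx i d)" using dom vx_in[OF i h(2)] h(1) by auto
    then show ?thesis using adj_sym[of "Eg k" u "vx i d"] by auto
  qed
  have d0: "vx i 0 \<in> S \<or> vx i 1 \<in> S \<or> vx i 2 \<in> S"
  proof (rule ccontr)
    assume h: "\<not> ?thesis"
    then obtain u where "u\<in>S" "adj (Eg k) (vx i 0) u" using dm[of 0] by auto
    then show False using h nb0[OF i, of u] by auto
  qed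
  have d1: "vx i 1 \<in> S \<or> vx i 0 \<in> S \<or> vx i 4 \<in> S"
  proof (rule ccontr)
    assume h: "\<not> ?thesis"
    then obtain u where "u\<in>S" "adj (Eg k) (vx i 1) u" using dm[of 1] by auto
    then show False using h nb1[OF i, of u] by auto
  qed
  have d2: "vx i 2 \<in> S \<or> vx i 0 \<in> S \<or> vx i 3 \<in> S"
  proof (rule ccontr)
    assume h: "\<not> ?thesis"
    then obtain u where "u\<in>S" "adj (Eg k) (vx i 2) u" using dm[of 2] by auto
    then show False using h nb2[OF i, of u] by auto
  qed
  have c1: "\<not> (vx i 1 \<in> S \<and> vx i 0 \<notin> S \<and> vx i 4 \<notin> S)"
  proof
    assume h: "vx i 1 \<in> S \<and> vx i 0 \<notin> S \<and> vx i 4 \<notin> S"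
    show False by (rule closed_local[OF conn s i, of "vx i 1" "{vx i 1}"]) (use h nb1[OF i] in auto)
  qed
  have c2: "\<not> (vx i 2 \<in> S \<and> vx i 0 \<notin> S \<and> vx i 3 \<notin> S)"
  proof
    assume h: "vx i 2 \<in> S \<and> vx i 0 \<notin> S \<and> vx i 3 \<notin> S"
    show False by (rule closed_local[OF conn s i, of "vx i 2" "{vx i 2}"]) (use h nb2[OF i] in auto)
  qed
  have c0: "\<not> (vx i 0 \<in> S \<and> vx i 1 \<notin> S \<and> vx i 2 \<notin> S)"
  proof
    assume h: "vx i 0 \<in> S \<and> vx i 1 \<notin> S \<and> vx i 2 \<notin> S"
    show False by (rule closed_local[OF conn s i, of "vx i 0" "{vx i 0}"]) (use h nb0[OF i] in auto)
  qed
  have c01: "\<not> (vx i 0 \<in> S \<and> vx i 1 \<in> S \<and> vx i 2 \<notin> S \<and> vx i 4 \<notin> S)"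
  proof
    assume h: "vx i 0 \<in> S \<and> vx i 1 \<in> S \<and> vx i 2 \<notin> S \<and> vx i 4 \<notin> S"
    show False by (rule closed_local[OF conn s i, of "vx i 0" "{vx i 0, vx i 1}"]) (use h nb0[OF i] nb1[OF i] in auto)
  qed
  have c02: "\<not> (vx i 0 \<in> S \<and> vx i 2 \<in> S \<and> vx i 1 \<notin> S \<and> vx i 3 \<notin> S)"
  proof
    assume h: "vx i 0 \<in> S \<and> vx i 2 \<in> S \<and> vx i 1 \<notin> S \<and> vx i 3 \<notin> S"
    show False by (rule closed_local[OF conn s i, of "vx i 0" "{vx i 0, vx i 2}"]) (use h nb0[OF i] nb2[OF i] in auto)
  qed
  have c012: "\<not> (vx i 0 \<in> S \<and> vx i 1 \<in> S \<and> vx i 2 \<in> S \<and> vx i 3 \<notin> S \<and> vx i 4 \<notin> S)"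
  proof
    assume h: "vx i 0 \<in> S \<and> vx i 1 \<in> S \<and> vx i 2 \<in> S \<and> vx i 3 \<notin> S \<and> vx i 4 \<notin> S"
    show False by (rule closed_local[OF conn s i, of "vx i 0" "{vx i 0, vx i 1, vx i 2}"])
      (use h nb0[OF i] nb1[OF i] nb2[OF i] in auto)
  qed
  have "(vx i 3 \<in> S \<and> vx i 4 \<in> S \<and> vx i 1 \<in> S) \<or> (vx i 3 \<in> S \<and> vx i 4 \<in> S \<and> vx i 2 \<in> S)
      \<or> (vx i 3 \<in> S \<and> vx i 2 \<in> S \<and> vx i 0 \<in> S) \<or> (vx i 4 \<in> S \<and> vx i 1 \<in> S \<and> vx i 0 \<in> S)"
    using d0 d1 d2 c0 c1 c2 c01 c02 c012 by blast
  then show ?thesis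
  proof (elim disjE)
    assume "vx i 3 \<in> S \<and> vx i 4 \<in> S \<and> vx i 1 \<in> S" then show ?thesis by (intro exI[of _ 0]) (simp add: pat_def)
  next
    assume "vx i 3 \<in> S \<and> vx i 4 \<in> S \<and> vx i 2 \<in> S" then show ?thesis by (intro exI[of _ 1]) (simp add: pat_def)
  next
    assume "vx i 3 \<in> S \<and> vx i 2 \<in> S \<and> vx i 0 \<in> S" then show ?thesis by (intro exI[of _ 2]) (simp add: pat_def)
  next
    assume "vx i 4 \<in> S \<and> vx i 1 \<in> S \<and> vx i 0 \<in> S" then show ?thesis by (intro exI[of _ 3]) (simp add: pat_def)
  qed
qed

lemma sv_mem: assumes k: "k \<ge> 2" and cds: "connected_dominating_set (Vg k) (Eg k) S"
  shows "sv k \<in> S"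
proof (rule ccontr)
  assume ns: "sv k \<notin> S"
  have dom: "\<forall>v\<in>Vg k - S. \<exists>u\<in>S. adj (Eg k) u v" and conn: "connected_set (Eg k) S"
    using cds unfolding connected_dominating_set_def dominating_set_def by auto
  obtain u where u: "u \<in> S" "adj (Eg k) u (sv k)" using dom sv_in ns by blast
  then have "adj (Eg k) (sv k) u" using adj_sym[of "Eg k" u "sv k"] by simp
  then obtain i where i: "i<k" "u = vx i 3 \<or> u = vx i 4" using nbs by blast
  obtain e where e: "e<5" "u = vx i e"
  proof -
    from i(2) show thesis
    proof
      assume "u = vx i 3" then show thesis by (intro that[of 3]) simp_all
    next
      assume "u = vx i 4" then show thesis by (intro that[of 4]) simp_all
    qed
  qed
  define j where "j = (if i = 0 then 1 else (0::nat))"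
  have j: "j<k" "j\<noteq>i" using k i by (auto simp: j_def)
  obtain w where w: "w \<in> S" "w = vx j 0 \<or> w = vx j 1 \<or> w = vx j 2"
  proof (cases "vx j 0 \<in> S")
    case True then show ?thesis using that by blast
  next
    case False
    obtain w where "w \<in> S" "adj (Eg k) w (vx j 0)" using dom vx_in[OF j(1), of 0] False by auto
    moreover then have "adj (Eg k) (vx j 0) w" using adj_sym[of "Eg k" w "vx j 0"] by simp
    ultimately show ?thesis using that nb0[OF j(1), of w] by auto
  qed
  define C where "C = {x \<in> S. \<exists>c<5. x = vx i c}"
  have wC: "w \<notin> C" using w j(2) unfolding C_def by (auto simp: vx_eq)
  have uC: "u \<in> C" using u e unfolding C_def by auto
  have cl: "\<forall>x\<in>C. \<forall>y\<in>S. adj (Eg k) x y \<longrightarrow> y \<in> C"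
  proof (intro ballI impI)
    fix x y assume x: "x \<in> C" and y: "y \<in> S" and a: "adj (Eg k) x y"
    then obtain c where c: "c<5" "x = vx i c" unfolding C_def by auto
    then have "y = sv k \<or> (\<exists>c<5. y = vx i c)" using nb_gen[OF i(1) c(1)] a by simp
    then show "y \<in> C" using y ns unfolding C_def by auto
  qed
  show False using closed_contra[OF conn uC _ w(1) wC cl] unfolding C_def by auto
qed

lemma minimal_iff: assumes k: "k \<ge> 2"
  shows "minimal_cds (Vg k) (Eg k) S \<longleftrightarrow> S \<in> Sf k ` (PiE {..<k} (\<lambda>_. {..<4}))"
proof
  assume m: "minimal_cds (Vg k) (Eg k) S"
  then have cds: "connected_dominating_set (Vg k) (Eg k) S" unfolding minimal_cds_def by simp
  have s: "sv k \<in> S" using sv_mem[OF k cds] .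
  define f where "f = restrict (\<lambda>i. SOME c. c<4 \<and> (\<forall>d\<in>pat c. vx i d \<in> S)) {..<k}"
  have fp: "f i < 4 \<and> (\<forall>d\<in>pat (f i). vx i d \<in> S)" if "i<k" for i
  proof -
    have "\<exists>c. c<4 \<and> (\<forall>d\<in>pat c. vx i d \<in> S)" using pat_contain[OF cds s that] by blast
    then have "(SOME c. c<4 \<and> (\<forall>d\<in>pat c. vx i d \<in> S)) < 4 \<and>
       (\<forall>d\<in>pat (SOME c. c<4 \<and> (\<forall>d\<in>pat c. vx i d \<in> S)). vx i d \<in> S)" by (rule someI_ex)
    then show ?thesis unfolding f_def using that by simp
  qed
  have fP: "f \<in> PiE {..<k} (\<lambda>_. {..<4})" unfolding f_def restrict_PiE_iff
    using fp unfolding f_def by auto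
  have sub: "Sf k f \<subseteq> S"
  proof
    fix u assume "u \<in> Sf k f"
    then show "u \<in> S" using Sf_cases[of u k f] s fp by auto
  qed
  have "connected_dominating_set (Vg k) (Eg k) (Sf k f)" using cds_Sf fp by blast
  then have "\<not> Sf k f \<subset> S" using m unfolding minimal_cds_def by blast
  then have "S = Sf k f" using sub by blast
  then show "S \<in> Sf k ` (PiE {..<k} (\<lambda>_. {..<4}))" using fP by blast
next
  assume "S \<in> Sf k ` (PiE {..<k} (\<lambda>_. {..<4}))"
  then obtain f where fP: "f \<in> PiE {..<k} (\<lambda>_. {..<4})" and S: "S = Sf k f" by blast
  have f4: "\<forall>i<k. f i < 4" using fP PiE_mem by fastforce
  have cds: "connected_dominating_set (Vg k) (Eg k) (Sf k f)" using cds_Sf[OF f4] .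
  have "\<not> connected_dominating_set (Vg k) (Eg k) T" if T: "T \<subset> Sf k f" for T
  proof
    assume cT: "connected_dominating_set (Vg k) (Eg k) T"
    have sT: "sv k \<in> T" using sv_mem[OF k cT] .
    have allin: "\<forall>d\<in>pat (f i). vx i d \<in> T" if i: "i<k" for i
    proof -
      obtain c where c: "c<4" "\<forall>d\<in>pat c. vx i d \<in> T" using pat_contain[OF cT sT i] by blast
      have "pat c \<subseteq> pat (f i)"
      proof
        fix d assume d: "d \<in> pat c"
        then have "vx i d \<in> Sf k f" using c T by blast
        then show "d \<in> pat (f i)" using mem[OF i pat_lt[OF d]] by simp
      qed
      then have "c = f i" using pat_inj c(1) f4 i by blast
      then show ?thesis using c by simp
    qed
    have "Sf k f \<subseteq> T"
    proof
      fix u assume "u \<in> Sf k f"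
      then show "u \<in> T" using Sf_cases[of u k f] sT allin by auto
    qed
    then show False using T by blast
  qed
  then show "minimal_cds (Vg k) (Eg k) S" unfolding minimal_cds_def S using cds by blast
qed

lemma inj_Sf: "inj_on (Sf k) (PiE {..<k} (\<lambda>_. {..<4}))"
proof (rule inj_onI)
  fix f g assume f: "f \<in> PiE {..<k} (\<lambda>_. {..<4})" and g: "g \<in> PiE {..<k} (\<lambda>_. {..<4})"
    and eq: "Sf k f = Sf k g"
  show "f = g"
  proof
    fix i show "f i = g i"
    proof (cases "i<k")
      case True
      have "pat (f i) \<subseteq> pat (g i)"
      proof
        fix d assume d: "d \<in> pat (f i)"
        then have "vx i d \<in> Sf k f" using mem[OF True pat_lt[OF d]] by simp
        then show "d \<in> pat (g i)" using eq mem[OF True pat_lt[OF d]] by simp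
      qed
      moreover have "f i < 4" "g i < 4" using f g True PiE_mem by fastforce+
      ultimately show ?thesis using pat_inj by blast
    next
      case False then show ?thesis using f g PiE_arb[of f] PiE_arb[of g] by simp
    qed
  qed
qed

lemma count: assumes "k \<ge> 2" shows "card {S. minimal_cds (Vg k) (Eg k) S} = 4 ^ k"
proof -
  have "{S. minimal_cds (Vg k) (Eg k) S} = Sf k ` (PiE {..<k} (\<lambda>_. {..<4}))"
    using minimal_iff[OF assms] by blast
  then have "card {S. minimal_cds (Vg k) (Eg k) S} = card (PiE {..<k} (\<lambda>_. {..<4::nat}))"
    using card_image[OF inj_Sf] by simp
  also have "\<dots> = 4 ^ k" by (simp add: card_PiE)
  finally show ?thesis .
qed




lemma sgraph_G: "sgraph (Vg k) (Eg k)"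
  unfolding sgraph_def Vg_def Eg_def by auto

lemma card_V: "card (Vg k) = 5*k+1" unfolding Vg_def by simp

lemma conn_V: "connected_set (Eg k) (Vg k)"
proof (rule conn[OF sv_in], rule ballI)
  fix u assume u: "u \<in> Vg k"
  show "(\<lambda>x y. x\<in>Vg k \<and> y\<in>Vg k \<and> adj (Eg k) x y)\<^sup>*\<^sup>* u (sv k)"
  proof (cases "u = sv k")
    case True then show ?thesis by simp
  next
    case False
    then obtain i d where id: "i<k" "d<5" "u = vx i d" using V_cases u by blast
    have "(\<lambda>x y. x\<in>Vg k \<and> y\<in>Vg k \<and> adj (Eg k) x y)\<^sup>*\<^sup>* (vx i d) (sv k)"
      by (rule pall[OF id(1) sv_in id(2)]) (simp_all add: vx_in id)
    then show ?thesis using id by simp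
  qed
qed

lemma card2: "card {a,b} \<le> 2" by (cases "a=b") auto

lemma deg: assumes "u \<in> Vg k"
  shows "\<exists>L. finite L \<and> card L \<le> 2 \<and> {w. u \<le> w \<and> adj (Eg k) u w} \<subseteq> L"
proof (cases "u = sv k")
  case True
  have "{w. u \<le> w \<and> adj (Eg k) u w} \<subseteq> {}"
  proof
    fix w assume "w \<in> {w. u \<le> w \<and> adj (Eg k) u w}"
    then have w: "sv k \<le> w" "adj (Eg k) (sv k) w" using True by auto
    then obtain j where j: "j<k" "w = vx j 3 \<or> w = vx j 4" using nbs by blast
    then have "w < sv k" using vx_lt_sv[of j k 3] vx_lt_sv[of j k 4] by auto
    then show "w \<in> {}" using w by simp
  qed
  then show ?thesis by (intro exI[of _ "{}"]) simp
next
  case False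
  then obtain i d where id: "i<k" "d<5" "u = vx i d" using V_cases assms by blast
  define L where "L = (if d=0 then {vx i 1, vx i 2} else if d=1 then {vx i 4, vx i 4} else if d=2 then {vx i 3, vx i 3}
     else if d=3 then {vx i 4, sv k} else {sv k, sv k})"
  have "{w. u \<le> w \<and> adj (Eg k) u w} \<subseteq> L"
  proof
    fix w assume "w \<in> {w. u \<le> w \<and> adj (Eg k) u w}"
    then have w: "vx i d \<le> w" "adj (Eg k) (vx i d) w" using id by auto
    then show "w \<in> L" using nbv[OF id(1) id(2), of w] unfolding L_def by auto
  qed
  moreover have "finite L" "card L \<le> 2" unfolding L_def by (simp_all add: card2)
  ultimately show ?thesis by blast
qed

lemma twodeg: "two_degenerate (Vg k) (Eg k)"
  unfolding two_degenerate_def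
proof (intro exI[of _ "[0..<5*k+1]"] conjI allI impI)
  show "distinct [0..<5*k+1]" by simp
  show "set [0..<5*k+1] = Vg k" unfolding Vg_def by auto
  fix i assume i: "i < length [0..<5*k+1]"
  then have iV: "i \<in> Vg k" unfolding Vg_def by auto
  obtain L where L: "finite L" "card L \<le> 2" "{w. i \<le> w \<and> adj (Eg k) i w} \<subseteq> L" using deg[OF iV] by blast
  have "{w \<in> set (drop i [0..<5*k+1]). adj (Eg k) ([0..<5*k+1] ! i) w} \<subseteq> {w. i \<le> w \<and> adj (Eg k) i w}"
  proof
    fix w assume w: "w \<in> {w \<in> set (drop i [0..<5*k+1]). adj (Eg k) ([0..<5*k+1] ! i) w}"
    have nth: "[0..<5*k+1] ! i = i" using i by (simp del: upt_Suc)
    have "set (drop i [0..<5*k+1]) = {i..<5*k+1}" by (simp del: upt_Suc)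
    then show "w \<in> {w. i \<le> w \<and> adj (Eg k) i w}" using w nth by auto
  qed
  then have "card {w \<in> set (drop i [0..<5*k+1]). adj (Eg k) ([0..<5*k+1] ! i) w} \<le> card L"
    using L by (meson card_mono order_trans)
  then show "card {w \<in> set (drop i [0..<5*k+1]). adj (Eg k) ([0..<5*k+1] ! i) w} \<le> 2" using L by simp
qed

theorem mainTheorem15:
  fixes k :: nat
  assumes "k \<ge> 2"
  shows "\<exists>(V :: nat set) E. sgraph V E \<and> card V = 5 * k + 1 \<and> connected_set E V \<and>
           two_degenerate V E \<and> card {S. minimal_cds V E S} = 4 ^ k"
  using sgraph_G card_V conn_V twodeg count[OF assms] by blast


end
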